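(* Let $n\ge 3$, let $C_n$ be the cycle on $n$ vertices, and let $v\in V(C_n)$. Then $$TDV(v)=\begin{cases}2 & \text{if } n\equiv 0 \pmod 4,\\ \left\lfloor \frac n2\right\rfloor+1 & \text{if } n\equiv 1,3 \pmod 4,\\ \frac n2\cdot\frac{n+2}{4} & \text{if } n\equiv 2 \pmod 4.\end{cases}$$
   Context: A set $D \subseteq V(G)$ is a total dominating set of a graph $G$ if every vertex of $G$ has a neighbor in $D$. $\gamma_t(G)$ is the minimum cardinality of a total dominating set; a minimum one is a $\gamma_t(G)$-set. $TDV(v)$ is the number of $\gamma_t(C_n)$-sets containing $v$. *)

theory Defs
  imports Main
begin

definition is_tds :: "'a set \<Rightarrow> ('a \<Rightarrow> 'a \<Rightarrow> bool) \<Rightarrow> 'a set \<Rightarrow> bool" where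
  "is_tds V E D \<longleftrightarrow> D \<subseteq> V \<and> (\<forall>x\<in>V. \<exists>y\<in>D. E x y)"

definition gamma_t :: "'a set \<Rightarrow> ('a \<Rightarrow> 'a \<Rightarrow> bool) \<Rightarrow> nat" where
  "gamma_t V E = (LEAST k. \<exists>D. is_tds V E D \<and> card D = k)"

definition gamma_t_sets :: "'a set \<Rightarrow> ('a \<Rightarrow> 'a \<Rightarrow> bool) \<Rightarrow> 'a set set" where
  "gamma_t_sets V E = {D. is_tds V E D \<and> card D = gamma_t V E}"

definition cycle_adj :: "nat \<Rightarrow> nat \<Rightarrow> nat \<Rightarrow> bool" where
  "cycle_adj n i j \<longleftrightarrow> i < n \<and> j < n \<and> (j = (i + 1) mod n \<or> i = (j + 1) mod n)"

definition TDV :: "nat \<Rightarrow> nat \<Rightarrow> nat" where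
  "TDV n v = card {D \<in> gamma_t_sets {0..<n} (cycle_adj n). v \<in> D}"

end

theory Submission
  imports Defs
begin

definition cov :: "nat \<Rightarrow> nat set \<Rightarrow> bool" where
  "cov m T \<longleftrightarrow> T \<subseteq> {..<m} \<and> (\<forall>i<m. i \<in> T \<or> Suc i mod m \<in> T)"

definition Mc :: "nat \<Rightarrow> nat set set" where
  "Mc m = {T. cov m T \<and> card T = (m+1) div 2}"

definition S :: "nat \<Rightarrow> nat \<Rightarrow> nat set" where
  "S m k = (\<lambda>t. (k+t) mod m) ` {t. t < m \<and> even t}"

lemma pos_inj:
  fixes c t t' m :: nat
  assumes "(c+t) mod m = (c+t') mod m" "t < m" "t' < m"
  shows "t = t'"
proof -
  { fix a b :: nat assume ab: "a \<le> b" "(c+a) mod m = (c+b) mod m" "b < m"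
    then have "m dvd (c+b) - (c+a)" using mod_eq_dvd_iff_nat[of "c+a" "c+b" m] by simp
    then have "m dvd b - a" by simp
    moreover have "b - a < m" using ab by linarith
    ultimately have "b - a = 0" using dvd_imp_le by (cases "b - a = 0") auto
    with ab have "a = b" by simp
  }
  with assms show ?thesis by (metis nat_le_linear)
qed

lemma pos_inj2:
  fixes c c' t m :: nat
  assumes "(c+t) mod m = (c'+t) mod m" "c < m" "c' < m"
  shows "c = c'"
  using pos_inj[of t c m c'] assms by (simp add: add.commute)

lemma pos_bij:
  fixes k m :: nat
  assumes "0 < m"
  shows "(\<lambda>t. (k+t) mod m) ` {..<m} = {..<m}"
proof (rule endo_inj_surj)
  show "(\<lambda>t. (k+t) mod m) ` {..<m} \<subseteq> {..<m}" using assms by auto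
  show "inj_on (\<lambda>t. (k+t) mod m) {..<m}" by (auto intro: inj_onI pos_inj)
qed simp

lemma pos_ex:
  assumes "x < (m::nat)"
  obtains t where "t < m" "x = (k+t) mod m"
proof -
  have "x \<in> (\<lambda>t. (k+t) mod m) ` {..<m}" using pos_bij[of m k] assms by simp
  then show ?thesis using that by auto
qed

lemma S_mem:
  assumes "t < m"
  shows "(k+t) mod m \<in> S m k \<longleftrightarrow> even t"
proof
  assume "(k+t) mod m \<in> S m k"
  then obtain t' where "t' < m" "even t'" "(k+t) mod m = (k+t') mod m" unfolding S_def by auto
  with pos_inj[of k t m t'] assms show "even t" by simp
next
  assume "even t" then show "(k+t) mod m \<in> S m k" using assms unfolding S_def by auto
qed

lemma S_sub: "0 < m \<Longrightarrow> S m k \<subseteq> {..<m}"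
  unfolding S_def by auto

lemma card_even: "card {t::nat. t < m \<and> even t} = (m+1) div 2"
proof (induction m)
  case 0 then show ?case by simp
next
  case (Suc m)
  have e: "{t. t < Suc m \<and> even t} = (if even m then insert m {t. t < m \<and> even t} else {t. t < m \<and> even t})"
    by (auto simp: less_Suc_eq)
  show ?case
  proof (cases "even m")
    case True
    then show ?thesis using e Suc by (simp; presburger)
  next
    case False
    then show ?thesis using e Suc by (simp; presburger)
  qed
qed

lemma card_S: "0 < m \<Longrightarrow> card (S m k) = (m+1) div 2"
proof -
  assume m: "0 < m"
  have "inj_on (\<lambda>t. (k+t) mod m) {t. t < m \<and> even t}" by (auto intro: inj_onI pos_inj)
  then show ?thesis unfolding S_def by (simp add: card_image card_even)
qed

lemma cov_S:
  assumes "0 < m" "k < m"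
  shows "cov m (S m k)"
  unfolding cov_def
proof (intro conjI allI impI)
  show "S m k \<subseteq> {..<m}" using S_sub assms by simp
  fix x assume x: "x < m"
  obtain t where t: "t < m" "x = (k+t) mod m" using pos_ex[OF x] .
  show "x \<in> S m k \<or> Suc x mod m \<in> S m k"
  proof (cases "even t")
    case True then show ?thesis using S_mem t by simp
  next
    case False
    have sx: "Suc x mod m = (k + Suc t) mod m" using t by (simp add: mod_Suc_eq)
    show ?thesis
    proof (cases "Suc t < m")
      case True
      then show ?thesis using S_mem[OF True, of k] False sx by simp
    next
      case False
      then have "Suc t = m" using t by simp
      then have "Suc x mod m = (k + 0) mod m" using sx by simp
      then show ?thesis using S_mem[of 0 m k] assms by simp
    qed
  qed
qed

lemma S_Mc: "0 < m \<Longrightarrow> k < m \<Longrightarrow> S m k \<in> Mc m"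
  unfolding Mc_def using cov_S card_S by simp

lemma sum_ge1:
  fixes f :: "'a \<Rightarrow> nat"
  assumes "finite A" "\<forall>x\<in>A. 1 \<le> f x"
  shows "card A \<le> sum f A"
proof -
  have "sum (\<lambda>x. 1) A \<le> sum f A" using assms by (intro sum_mono) auto
  then show ?thesis by simp
qed

lemma sum_ge_extra1:
  fixes f :: "'a \<Rightarrow> nat"
  assumes "finite A" "\<forall>x\<in>A. 1 \<le> f x" "i \<in> A" "2 \<le> f i"
  shows "card A + 1 \<le> sum f A"
proof -
  have "sum f A = f i + sum f (A - {i})" using assms by (simp add: sum.remove)
  moreover have "card (A - {i}) \<le> sum f (A - {i})" using assms by (intro sum_ge1) auto
  moreover have "card (A - {i}) + 1 = card A"
  proof -
    have "0 < card A" using assms card_gt_0_iff by blast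
    then show ?thesis using assms by (simp add: card_Diff_singleton)
  qed
  ultimately show ?thesis using assms by linarith
qed

lemma sum_ge_extra2:
  fixes f :: "'a \<Rightarrow> nat"
  assumes "finite A" "\<forall>x\<in>A. 1 \<le> f x" "i \<in> A" "2 \<le> f i" "j \<in> A" "j \<noteq> i" "2 \<le> f j"
  shows "card A + 2 \<le> sum f A"
proof -
  have "sum f A = f i + sum f (A - {i})" using assms by (simp add: sum.remove)
  moreover have "card (A - {i}) + 1 \<le> sum f (A - {i})" using assms by (intro sum_ge_extra1[of _ _ j]) auto
  moreover have "card (A - {i}) + 1 = card A"
  proof -
    have "0 < card A" using assms card_gt_0_iff by blast
    then show ?thesis using assms by (simp add: card_Diff_singleton)
  qed
  ultimately show ?thesis using assms by linarith
qed

lemma sum_shift: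
  "(\<Sum>i<Suc k. f (Suc i mod Suc k)) = (\<Sum>i<Suc k. (f i :: nat))"
proof -
  have "(\<Sum>i<Suc k. f (Suc i mod Suc k)) = (\<Sum>i<k. f (Suc i mod Suc k)) + f 0"
    by simp
  moreover have "(\<Sum>i<k. f (Suc i mod Suc k)) = (\<Sum>i<k. f (Suc i))"
    by (intro sum.cong) auto
  moreover have "(\<Sum>i<Suc k. f i) = f 0 + (\<Sum>i<k. f (Suc i))" by (rule sum.lessThan_Suc_shift)
  ultimately show ?thesis by linarith
qed

definition aa :: "nat \<Rightarrow> nat set \<Rightarrow> nat \<Rightarrow> nat" where
  "aa m T i = of_bool (i \<in> T) + of_bool (Suc i mod m \<in> T)"

lemma sum_aa:
  assumes "0 < m" "T \<subseteq> {..<m}"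
  shows "(\<Sum>i<m. aa m T i) = 2 * card T"
proof -
  obtain k where k: "m = Suc k" using assms by (cases m) auto
  have c: "(\<Sum>i<m. (of_bool (i \<in> T)::nat)) = card T"
    using assms by (simp add: Int_absorb1 inf.absorb2)
  have "(\<Sum>i<m. (of_bool (Suc i mod m \<in> T)::nat)) = (\<Sum>i<m. (of_bool (i \<in> T)::nat))"
    using sum_shift[of "\<lambda>i. of_bool (i \<in> T)" k] k by simp
  then show ?thesis using c unfolding aa_def by (simp add: sum.distrib)
qed

lemma aa_ge1: "cov m T \<Longrightarrow> i < m \<Longrightarrow> 1 \<le> aa m T i"
  unfolding cov_def aa_def by auto

lemma cov_card: "0 < m \<Longrightarrow> cov m T \<Longrightarrow> (m+1) div 2 \<le> card T"
proof -
  assume m: "0 < m" and c: "cov m T"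
  have "m \<le> (\<Sum>i<m. aa m T i)" using sum_ge1[of "{..<m}" "aa m T"] aa_ge1[OF c] by simp
  then have "m \<le> 2 * card T" using sum_aa m c unfolding cov_def by simp
  then show ?thesis by linarith
qed

lemma alt_ind:
  assumes "\<forall>t. Suc t < L \<longrightarrow> (P (Suc t) \<longleftrightarrow> \<not> P t)"
  shows "t < L \<Longrightarrow> (P t \<longleftrightarrow> (P 0 \<longleftrightarrow> even t))"
proof (induction t)
  case 0 then show ?case by simp
next
  case (Suc t) then show ?case using assms by auto
qed

lemma G:
  assumes T: "T \<subseteq> {..<m}" and k: "k < m" "k \<in> T"
    and alt: "\<forall>t. Suc t < m \<longrightarrow> (((k + Suc t) mod m \<in> T) \<longleftrightarrow> \<not> ((k+t) mod m \<in> T))"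
  shows "T = S m k"
proof -
  have P: "\<And>t. t < m \<Longrightarrow> ((k+t) mod m \<in> T \<longleftrightarrow> even t)"
    using alt_ind[of m "\<lambda>t. (k+t) mod m \<in> T"] alt k by simp
  show ?thesis
  proof (intro set_eqI iffI)
    fix x assume x: "x \<in> T"
    then have "x < m" using T by auto
    then obtain t where t: "t < m" "x = (k+t) mod m" using pos_ex by blast
    then show "x \<in> S m k" using P S_mem x by simp
  next
    fix x assume x: "x \<in> S m k"
    then have "x < m" using S_sub[of m k] k by auto
    then obtain t where t: "t < m" "x = (k+t) mod m" using pos_ex by blast
    then show "x \<in> T" using P S_mem x by simp
  qed
qed

lemma aa1: "aa m T i = 1 \<Longrightarrow> (Suc i mod m \<in> T \<longleftrightarrow> \<not> i \<in> T)"
  unfolding aa_def by (cases "i \<in> T"; cases "Suc i mod m \<in> T") auto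

lemma aa_le2: "aa m T i \<le> 2" unfolding aa_def by simp

lemma aa2: "2 \<le> aa m T i \<Longrightarrow> i \<in> T \<and> Suc i mod m \<in> T"
  unfolding aa_def by (cases "i \<in> T"; cases "Suc i mod m \<in> T") auto

lemma char_odd:
  assumes "odd m" "T \<in> Mc m"
  shows "\<exists>k<m. T = S m k"
proof -
  have m: "0 < m" using assms by (cases m) auto
  have c: "cov m T" and cd: "card T = (m+1) div 2" using assms unfolding Mc_def by auto
  have T: "T \<subseteq> {..<m}" using c unfolding cov_def by auto
  have sm: "(\<Sum>i<m. aa m T i) = m + 1" using sum_aa[OF m T] cd assms by presburger
  have ge: "\<forall>i\<in>{..<m}. 1 \<le> aa m T i" using aa_ge1[OF c] by auto
  obtain i0 where i0: "i0 < m" "aa m T i0 \<noteq> 1"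
  proof (rule ccontr)
    assume "\<not> thesis"
    then have "\<forall>i<m. aa m T i = 1" using that by blast
    then have "(\<Sum>i<m. aa m T i) = (\<Sum>i<m. 1)" by (intro sum.cong) auto
    then show False using sm by simp
  qed
  have "1 \<le> aa m T i0" using i0 ge by simp
  then have i02: "2 \<le> aa m T i0" using i0 by linarith
  have one: "\<And>i. i < m \<Longrightarrow> i \<noteq> i0 \<Longrightarrow> aa m T i = 1"
  proof (rule ccontr)
    fix i assume i: "i < m" "i \<noteq> i0" "aa m T i \<noteq> 1"
    moreover have "1 \<le> aa m T i" using i ge by simp
    ultimately have "2 \<le> aa m T i" by linarith
    then have "card {..<m} + 2 \<le> (\<Sum>i<m. aa m T i)"
      using sum_ge_extra2[of "{..<m}" "aa m T" i0 i] ge i0 i i02 by auto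
    then show False using sm by simp
  qed
  define k where "k = Suc i0 mod m"
  have k: "k < m" "k \<in> T" using aa2[OF i02] m unfolding k_def by auto
  have alt: "\<forall>t. Suc t < m \<longrightarrow> (((k + Suc t) mod m \<in> T) \<longleftrightarrow> \<not> ((k+t) mod m \<in> T))"
  proof (intro allI impI)
    fix t assume t: "Suc t < m"
    define x where "x = (k+t) mod m"
    have x: "x < m" using m unfolding x_def by simp
    have "x = (i0 + Suc t) mod m" unfolding x_def k_def by (simp add: mod_add_left_eq)
    then have "x \<noteq> i0"
    proof -
      assume xe: "x = (i0 + Suc t) mod m"
      show "x \<noteq> i0"
      proof
        assume "x = i0"
        then have "(i0 + Suc t) mod m = (i0 + 0) mod m" using xe i0 by simp
        then have "Suc t = 0" using pos_inj[of i0 "Suc t" m 0] t m by blast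
        then show False by simp
      qed
    qed
    then have "aa m T x = 1" using one x by simp
    moreover have "Suc x mod m = (k + Suc t) mod m" unfolding x_def by (simp add: mod_Suc_eq)
    ultimately show "((k + Suc t) mod m \<in> T) \<longleftrightarrow> \<not> ((k+t) mod m \<in> T)"
      using aa1 unfolding x_def by metis
  qed
  show ?thesis using G[OF T k alt] k by blast
qed

lemma char_even:
  assumes "even m" "2 \<le> m" "T \<in> Mc m"
  shows "T = S m 0 \<or> T = S m 1"
proof -
  have m: "0 < m" using assms by simp
  have c: "cov m T" and cd: "card T = (m+1) div 2" using assms unfolding Mc_def by auto
  have T: "T \<subseteq> {..<m}" using c unfolding cov_def by auto
  have sm: "(\<Sum>i<m. aa m T i) = m" using sum_aa[OF m T] cd assms by presburger
  have ge: "\<forall>i\<in>{..<m}. 1 \<le> aa m T i" using aa_ge1[OF c] by auto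
  have one: "\<And>i. i < m \<Longrightarrow> aa m T i = 1"
  proof (rule ccontr)
    fix i assume i: "i < m" "aa m T i \<noteq> 1"
    moreover have "1 \<le> aa m T i" using i ge by simp
    ultimately have "2 \<le> aa m T i" by linarith
    then have "card {..<m} + 1 \<le> (\<Sum>i<m. aa m T i)"
      using sum_ge_extra1[of "{..<m}" "aa m T" i] ge i by auto
    then show False using sm by simp
  qed
  have alt: "\<And>k. \<forall>t. Suc t < m \<longrightarrow> (((k + Suc t) mod m \<in> T) \<longleftrightarrow> \<not> ((k+t) mod m \<in> T))"
  proof (intro allI impI)
    fix k t assume t: "Suc t < m"
    define x where "x = (k+t) mod m"
    have x: "x < m" using m unfolding x_def by simp
    then have "aa m T x = 1" using one by simp
    moreover have "Suc x mod m = (k + Suc t) mod m" unfolding x_def by (simp add: mod_Suc_eq)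
    ultimately show "((k + Suc t) mod m \<in> T) \<longleftrightarrow> \<not> ((k+t) mod m \<in> T)"
      using aa1 unfolding x_def by metis
  qed
  show ?thesis
  proof (cases "0 \<in> T")
    case True
    then show ?thesis using G[OF T _ True alt] m by simp
  next
    case False
    have "aa m T 0 = 1" using one m by simp
    then have "1 \<in> T" using aa1[of m T 0] False assms by simp
    then show ?thesis using G[OF T _ _ alt, of 1] assms by simp
  qed
qed

lemma S_self: "0 < m \<Longrightarrow> k < m \<Longrightarrow> k \<in> S m k"
  using S_mem[of 0 m k] by simp

lemma S_inj:
  assumes "odd m" "k < m" "k' < m" "S m k = S m k'"
  shows "k = k'"
proof -
  have m: "0 < m" using assms by auto
  obtain d where d: "d < m" "k = (k'+d) mod m" using pos_ex[OF assms(2)] by blast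
  have "k \<in> S m k'" using S_self[OF m assms(2)] assms by simp
  then have ed: "even d" using S_mem[OF d(1), of k'] d by simp
  show ?thesis
  proof (cases "d = 0")
    case True then show ?thesis using d assms by simp
  next
    case False
    then have d2: "2 \<le> d" using ed by presburger
    define x where "x = (k' + (d-1)) mod m"
    have "x \<notin> S m k'" using S_mem[of "d-1" m k'] d ed d2 unfolding x_def by simp
    moreover have "x = (k + (m-1)) mod m"
    proof -
      have "(k + (m-1)) mod m = ((k'+d) mod m + (m-1)) mod m" by (simp only: d(2))
      also have "\<dots> = (k'+d + (m-1)) mod m" by (rule mod_add_left_eq)
      also have "k'+d + (m-1) = (k' + (d-1)) + m" using d2 m by simp
      finally show ?thesis unfolding x_def by simp
    qed
    moreover have "(k + (m-1)) mod m \<in> S m k" using S_mem[of "m-1" m k] m assms by simp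
    ultimately show ?thesis using assms by simp
  qed
qed

lemma Mc_odd: "odd m \<Longrightarrow> Mc m = S m ` {..<m}"
proof -
  assume o: "odd m"
  then have m: "0 < m" by presburger
  show ?thesis using char_odd[OF o] S_Mc[OF m] by blast
qed

lemma card_Mc_odd: "odd m \<Longrightarrow> card (Mc m) = m"
proof -
  assume o: "odd m"
  have "inj_on (S m) {..<m}" using S_inj[OF o] by (auto intro: inj_onI)
  then show ?thesis using Mc_odd[OF o] by (simp add: card_image)
qed

lemma card_Mc_odd_j:
  assumes "odd m" "j < m"
  shows "card {T \<in> Mc m. j \<in> T} = (m+1) div 2"
proof -
  have m: "0 < m" using assms by auto
  define f where "f t = (j + (m - t)) mod m" for t
  have ff: "t \<le> m \<Longrightarrow> (f t + t) mod m = j" for t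
  proof -
    assume "t \<le> m"
    then have "(f t + t) mod m = (j + (m-t) + t) mod m" unfolding f_def by (simp add: mod_add_left_eq)
    also have "j + (m-t) + t = j + m" using \<open>t \<le> m\<close> by simp
    finally show ?thesis using assms by simp
  qed
  have finj: "inj_on f {t. t < m \<and> even t}"
  proof (rule inj_onI)
    fix t t' assume tt: "t \<in> {t. t < m \<and> even t}" "t' \<in> {t. t < m \<and> even t}" "f t = f t'"
    have a: "(f t + t) mod m = j" using ff tt(1) by simp
    have b: "(f t' + t') mod m = j" using ff tt(2) by simp
    have b': "(f t + t') mod m = j" using b tt(3) by simp
    have "(f t + t) mod m = (f t + t') mod m" using a b' by simp
    then show "t = t'" using pos_inj[of "f t" t m t'] tt by auto
  qed
  have fim: "{k. k < m \<and> j \<in> S m k} = f ` {t. t < m \<and> even t}"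
  proof (intro set_eqI iffI)
    fix k assume k: "k \<in> {k. k < m \<and> j \<in> S m k}"
    then obtain t where t: "t < m" "even t" "j = (k+t) mod m" unfolding S_def by auto
    have "(f t + t) mod m = (k + t) mod m" using ff[of t] t by simp
    moreover have "f t < m" using m unfolding f_def by simp
    ultimately have "f t = k" using pos_inj2[of "f t" t m k] k by auto
    then have "k = f t" by simp
    then show "k \<in> f ` {t. t < m \<and> even t}" using t by auto
  next
    fix k assume "k \<in> f ` {t. t < m \<and> even t}"
    then obtain t where t: "t < m" "even t" "k = f t" by auto
    have "(k + t) mod m = j" using ff[of t] t by simp
    then have "j \<in> S m k" using S_mem[of t m k] t by simp
    moreover have "k < m" using m t unfolding f_def by simp
    ultimately show "k \<in> {k. k < m \<and> j \<in> S m k}" by simp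
  qed
  have inj: "inj_on (S m) {..<m}" using S_inj[OF assms(1)] by (auto intro: inj_onI)
  have "{T \<in> Mc m. j \<in> T} = S m ` {k. k < m \<and> j \<in> S m k}"
    using Mc_odd[OF assms(1)] by auto
  moreover have "card (S m ` {k. k < m \<and> j \<in> S m k}) = card {k. k < m \<and> j \<in> S m k}"
    using inj by (intro card_image) (auto intro: inj_on_subset)
  ultimately show ?thesis using fim finj card_even by (simp add: card_image)
qed

lemma S0_even: "0 < m \<Longrightarrow> j < m \<Longrightarrow> j \<in> S m 0 \<longleftrightarrow> even j"
  using S_mem[of j m 0] by simp

lemma S1_even:
  assumes "even m" "0 < m" "j < m"
  shows "j \<in> S m 1 \<longleftrightarrow> odd j"
proof (cases j)
  case 0
  have "(1 + (m-1)) mod m = 0" using assms by simp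
  then show ?thesis using S_mem[of "m-1" m 1] assms 0 by simp
next
  case (Suc i)
  then show ?thesis using S_mem[of i m 1] assms by simp
qed

lemma Mc_even: "even m \<Longrightarrow> 2 \<le> m \<Longrightarrow> Mc m = {S m 0, S m 1}"
  using char_even S_Mc[of m 0] S_Mc[of m 1] by auto

lemma S01_ne: "even m \<Longrightarrow> 2 \<le> m \<Longrightarrow> S m 0 \<noteq> S m 1"
  using S0_even[of m 0] S1_even[of m 0] by auto

lemma card_Mc_even: "even m \<Longrightarrow> 2 \<le> m \<Longrightarrow> card (Mc m) = 2"
  using Mc_even S01_ne by simp

lemma card_Mc_even_j:
  assumes "even m" "2 \<le> m" "j < m"
  shows "card {T \<in> Mc m. j \<in> T} = 1"
proof (cases "even j")
  case True
  then have "{T \<in> Mc m. j \<in> T} = {S m 0}" using Mc_even[OF assms(1,2)] S0_even[of m j] S1_even[of m j] assms by auto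
  then show ?thesis by simp
next
  case False
  then have "{T \<in> Mc m. j \<in> T} = {S m 1}" using Mc_even[OF assms(1,2)] S0_even[of m j] S1_even[of m j] assms by auto
  then show ?thesis by simp
qed

definition R :: "nat \<Rightarrow> nat set \<Rightarrow> bool" where
  "R n D \<longleftrightarrow> D \<subseteq> {..<n} \<and> (\<forall>y<n. y \<in> D \<or> (y+2) mod n \<in> D)"

lemma tds_iff:
  assumes n: "3 \<le> n"
  shows "is_tds {0..<n} (cycle_adj n) D \<longleftrightarrow> R n D"
proof
  assume t: "is_tds {0..<n} (cycle_adj n) D"
  then have D: "D \<subseteq> {..<n}" unfolding is_tds_def by auto
  show "R n D" unfolding R_def
  proof (intro conjI allI impI D)
    fix y assume y: "y < n"
    define x where "x = Suc y mod n"
    have "x \<in> {0..<n}" using n unfolding x_def by simp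
    then obtain z where z: "z \<in> D" "cycle_adj n x z" using t unfolding is_tds_def by blast
    then have "z = Suc x mod n \<or> x = Suc z mod n" unfolding cycle_adj_def by auto
    then show "y \<in> D \<or> (y+2) mod n \<in> D"
    proof
      assume "z = Suc x mod n"
      then have "z = (y+2) mod n" unfolding x_def by (simp add: mod_Suc_eq)
      then show ?thesis using z by simp
    next
      assume "x = Suc z mod n"
      then have "(1 + z) mod n = (1 + y) mod n" unfolding x_def by simp
      then have "z = y" using pos_inj[of 1 z n y] z D y by auto
      then show ?thesis using z by simp
    qed
  qed
next
  assume r: "R n D"
  then have D: "D \<subseteq> {..<n}" unfolding R_def by auto
  show "is_tds {0..<n} (cycle_adj n) D" unfolding is_tds_def
  proof (intro conjI ballI)
    show "D \<subseteq> {0..<n}" using D by auto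
    fix x assume x: "x \<in> {0..<n}"
    define y where "y = (x + (n-1)) mod n"
    have y: "y < n" using n unfolding y_def by simp
    have sy: "Suc y mod n = x"
    proof -
      have "Suc y mod n = Suc (x + (n-1)) mod n" unfolding y_def by (simp add: mod_Suc_eq)
      also have "Suc (x + (n-1)) = x + n" using n by simp
      finally show ?thesis using x by simp
    qed
    have y2: "(y+2) mod n = Suc x mod n"
    proof -
      have "(y+2) mod n = Suc (Suc y mod n) mod n" by (simp add: mod_Suc_eq)
      then show ?thesis using sy by simp
    qed
    have "y \<in> D \<or> (y+2) mod n \<in> D" using r y unfolding R_def by auto
    then show "\<exists>z\<in>D. cycle_adj n x z"
    proof
      assume "y \<in> D" then show ?thesis using sy x y unfolding cycle_adj_def by auto
    next
      assume "(y+2) mod n \<in> D"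
      then have "Suc x mod n \<in> D" using y2 by simp
      moreover have "Suc x mod n < n" using n by simp
      ultimately show ?thesis using x unfolding cycle_adj_def by (intro bexI[of _ "Suc x mod n"]) auto
    qed
  qed
qed

lemma gamma_eq:
  assumes "\<exists>D. is_tds V E D \<and> card D = g" "\<And>D. is_tds V E D \<Longrightarrow> g \<le> card D"
  shows "gamma_t V E = g"
  unfolding gamma_t_def
  by (rule Least_equality) (use assms in auto)

lemma odd_dvd2: "odd (n::nat) \<Longrightarrow> n dvd 2 * k \<Longrightarrow> n dvd k"
  by (metis coprime_commute coprime_dvd_mult_right_iff coprime_left_2_iff_odd mult.commute)

lemma phi_inj: "odd (n::nat) \<Longrightarrow> inj_on (\<lambda>i. (2*i) mod n) {..<n}"
proof (rule inj_onI)
  fix i j assume o: "odd n" and ij: "i \<in> {..<n}" "j \<in> {..<n}" "(2*i) mod n = (2*j) mod n"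
  { fix a b :: nat assume ab: "a \<le> b" "(2*a) mod n = (2*b) mod n" "b < n"
    then have "n dvd 2*b - 2*a" using mod_eq_dvd_iff_nat[of "2*a" "2*b" n] by simp
    then have "n dvd 2*(b - a)" by (simp add: diff_mult_distrib2)
    then have "n dvd b - a" using odd_dvd2 o by blast
    moreover have "b - a < n" using ab by linarith
    ultimately have "b - a = 0" using dvd_imp_le by (cases "b - a = 0") auto
    with ab have "a = b" by simp }
  with ij show "i = j" by (metis lessThan_iff nat_le_linear)
qed

lemma phi_surj: "odd (n::nat) \<Longrightarrow> (\<lambda>i. (2*i) mod n) ` {..<n} = {..<n}"
proof (rule endo_inj_surj)
  assume "odd n" then show "inj_on (\<lambda>i. (2*i) mod n) {..<n}" by (rule phi_inj)
  from \<open>odd n\<close> have "0 < n" by presburger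
  then show "(\<lambda>i. (2*i) mod n) ` {..<n} \<subseteq> {..<n}" by auto
qed simp

lemma R_phi:
  assumes o: "odd n" and T: "T \<subseteq> {..<n}"
  shows "R n ((\<lambda>i. (2*i) mod n) ` T) \<longleftrightarrow> cov n T"
proof -
  let ?p = "\<lambda>i. (2*i) mod n"
  have n: "0 < n" using o by presburger
  have inj: "inj_on ?p {..<n}" using phi_inj[OF o] .
  have mem: "\<And>i. i < n \<Longrightarrow> ?p i \<in> ?p ` T \<longleftrightarrow> i \<in> T"
    using inj T by (simp add: inj_on_image_mem_iff[OF inj])
  have step: "\<And>i. (?p i + 2) mod n = ?p (Suc i mod n)"
  proof -
    fix i
    have "(?p i + 2) mod n = (2*i + 2) mod n" by (rule mod_add_left_eq)
    also have "\<dots> = (2 * Suc i) mod n" by simp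
    also have "\<dots> = ?p (Suc i mod n)" by (simp add: mod_mult_right_eq)
    finally show "(?p i + 2) mod n = ?p (Suc i mod n)" .
  qed
  have sub: "?p ` T \<subseteq> {..<n}" using n by auto
  have "(\<forall>y<n. y \<in> ?p ` T \<or> (y+2) mod n \<in> ?p ` T) \<longleftrightarrow>
        (\<forall>i<n. ?p i \<in> ?p ` T \<or> (?p i+2) mod n \<in> ?p ` T)"
  proof
    assume h: "\<forall>y<n. y \<in> ?p ` T \<or> (y+2) mod n \<in> ?p ` T"
    show "\<forall>i<n. ?p i \<in> ?p ` T \<or> (?p i+2) mod n \<in> ?p ` T" using h n by auto
  next
    assume h: "\<forall>i<n. ?p i \<in> ?p ` T \<or> (?p i+2) mod n \<in> ?p ` T"
    show "\<forall>y<n. y \<in> ?p ` T \<or> (y+2) mod n \<in> ?p ` T"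
    proof (intro allI impI)
      fix y assume "y < n"
      then have "y \<in> ?p ` {..<n}" using phi_surj[OF o] by simp
      then obtain i where "i < n" "y = ?p i" by auto
      then show "y \<in> ?p ` T \<or> (y+2) mod n \<in> ?p ` T" using h by simp
    qed
  qed
  also have "\<dots> \<longleftrightarrow> (\<forall>i<n. i \<in> T \<or> Suc i mod n \<in> T)"
    using mem step n by simp
  finally show ?thesis unfolding R_def cov_def using sub T by simp
qed

lemma R_phi_ex:
  assumes o: "odd n" and r: "R n D"
  shows "D = (\<lambda>i. (2*i) mod n) ` {i. i < n \<and> (2*i) mod n \<in> D}"
proof -
  have D: "D \<subseteq> {..<n}" using r unfolding R_def by simp
  show ?thesis
  proof (intro set_eqI iffI)
    fix x assume "x \<in> D"
    moreover have "x \<in> (\<lambda>i. (2*i) mod n) ` {..<n}" using phi_surj[OF o] D \<open>x \<in> D\<close> by auto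
    ultimately show "x \<in> (\<lambda>i. (2*i) mod n) ` {i. i < n \<and> (2*i) mod n \<in> D}" by auto
  qed auto
qed

lemma odd_case:
  assumes n: "3 \<le> n" and o: "odd n" and v: "v < n"
  shows "TDV n v = (n+1) div 2"
proof -
  let ?p = "\<lambda>i. (2*i) mod n"
  have n0: "0 < n" using n by simp
  have inj: "inj_on ?p {..<n}" using phi_inj[OF o] .
  have cardp: "\<And>T. T \<subseteq> {..<n} \<Longrightarrow> card (?p ` T) = card T"
    using inj by (meson card_image inj_on_subset)
  have tds: "\<And>D. is_tds {0..<n} (cycle_adj n) D \<longleftrightarrow> R n D" using tds_iff[OF n] .
  have repr: "\<And>D. R n D \<Longrightarrow> \<exists>T. T \<subseteq> {..<n} \<and> cov n T \<and> D = ?p ` T"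
  proof -
    fix D assume r: "R n D"
    let ?T = "{i. i < n \<and> (2*i) mod n \<in> D}"
    have e: "D = ?p ` ?T" using R_phi_ex[OF o r] .
    have r2: "R n (?p ` ?T)" by (subst e[symmetric]) (rule r)
    have Ts: "?T \<subseteq> {..<n}" by auto
    have "cov n ?T" using R_phi[OF o Ts] r2 by simp
    then show "\<exists>T. T \<subseteq> {..<n} \<and> cov n T \<and> D = ?p ` T"
      by (intro exI[of _ ?T] conjI Ts e)
  qed
  have g: "gamma_t {0..<n} (cycle_adj n) = (n+1) div 2"
  proof (rule gamma_eq)
    have S: "S n 0 \<subseteq> {..<n}" "cov n (S n 0)" "card (S n 0) = (n+1) div 2"
      using S_sub[OF n0] cov_S[OF n0 n0] card_S[OF n0] by auto
    have "is_tds {0..<n} (cycle_adj n) (?p ` S n 0)" using tds R_phi[OF o S(1)] S(2) by simp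
    then show "\<exists>D. is_tds {0..<n} (cycle_adj n) D \<and> card D = (n+1) div 2"
      by (intro exI[of _ "?p ` S n 0"]) (simp add: cardp[OF S(1)] S(3))
  next
    fix D assume "is_tds {0..<n} (cycle_adj n) D"
    then have "R n D" using tds by simp
    then obtain T where T: "T \<subseteq> {..<n}" "cov n T" "D = ?p ` T" using repr by blast
    then show "(n+1) div 2 \<le> card D" using cov_card[OF n0 T(2)] cardp[OF T(1)] by simp
  qed
  have gs: "gamma_t_sets {0..<n} (cycle_adj n) = (\<lambda>T. ?p ` T) ` Mc n"
  proof (intro set_eqI iffI)
    fix D assume "D \<in> gamma_t_sets {0..<n} (cycle_adj n)"
    then have d: "R n D" "card D = (n+1) div 2" unfolding gamma_t_sets_def g using tds by auto
    then obtain T where T: "T \<subseteq> {..<n}" "cov n T" "D = ?p ` T" using repr by blast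
    then have "T \<in> Mc n" using d cardp unfolding Mc_def by simp
    then show "D \<in> (\<lambda>T. ?p ` T) ` Mc n" using T by blast
  next
    fix D assume "D \<in> (\<lambda>T. ?p ` T) ` Mc n"
    then obtain T where T: "T \<in> Mc n" "D = ?p ` T" by blast
    then have T': "T \<subseteq> {..<n}" "cov n T" "card T = (n+1) div 2" unfolding Mc_def cov_def by auto
    then show "D \<in> gamma_t_sets {0..<n} (cycle_adj n)"
      unfolding gamma_t_sets_def g using tds R_phi[OF o T'(1)] cardp T by simp
  qed
  have "v \<in> ?p ` {..<n}" using v phi_surj[OF o] by simp
  then obtain u where u: "u < n" "v = ?p u" by blast
  have sub: "\<And>T. T \<in> Mc n \<Longrightarrow> T \<subseteq> {..<n}" unfolding Mc_def cov_def by auto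
  have eq: "{D \<in> (\<lambda>T. ?p ` T) ` Mc n. v \<in> D} = (\<lambda>T. ?p ` T) ` {T \<in> Mc n. u \<in> T}"
  proof (intro set_eqI iffI)
    fix D assume "D \<in> {D \<in> (\<lambda>T. ?p ` T) ` Mc n. v \<in> D}"
    then obtain T where T: "T \<in> Mc n" "D = ?p ` T" "v \<in> D" by blast
    then have "u \<in> T" using u sub[OF T(1)] by (simp add: inj_on_image_mem_iff[OF inj])
    then show "D \<in> (\<lambda>T. ?p ` T) ` {T \<in> Mc n. u \<in> T}" using T by blast
  qed (use u in auto)
  have injI: "inj_on (\<lambda>T. ?p ` T) {T \<in> Mc n. u \<in> T}"
    using sub inj by (intro inj_onI) (simp add: inj_on_image_eq_iff)
  have "TDV n v = card {D \<in> (\<lambda>T. ?p ` T) ` Mc n. v \<in> D}"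
    unfolding TDV_def gs by simp
  also have "\<dots> = card {T \<in> Mc n. u \<in> T}" unfolding eq using injI by (simp add: card_image)
  also have "\<dots> = (n+1) div 2" using card_Mc_odd_j[OF o u(1)] .
  finally show ?thesis .
qed

definition U :: "nat set \<Rightarrow> nat set \<Rightarrow> nat set" where
  "U A B = (\<lambda>i. 2*i) ` A \<union> (\<lambda>i. 2*i+1) ` B"

lemma U_mem0: "2*i \<in> U A B \<longleftrightarrow> i \<in> A"
  unfolding U_def by auto presburger

lemma U_mem1: "2*i+1 \<in> U A B \<longleftrightarrow> i \<in> B"
  unfolding U_def by auto presburger

lemma U_sub: "A \<subseteq> {..<m} \<Longrightarrow> B \<subseteq> {..<m} \<Longrightarrow> U A B \<subseteq> {..<2*m}"
  unfolding U_def by auto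

lemma U_card: "finite A \<Longrightarrow> finite B \<Longrightarrow> card (U A B) = card A + card B"
proof -
  assume f: "finite A" "finite B"
  have d: "(\<lambda>i. 2*i) ` A \<inter> (\<lambda>i. (2::nat)*i+1) ` B = {}" by auto presburger
  have "card (U A B) = card ((\<lambda>i. 2*i) ` A) + card ((\<lambda>i. 2*i+1) ` B)"
    unfolding U_def using f d by (simp add: card_Un_disjoint)
  also have "\<dots> = card A + card B" by (simp add: card_image inj_on_def)
  finally show ?thesis .
qed

lemma U_repr:
  assumes "D \<subseteq> {..<2*m}"
  shows "D = U {i. i < m \<and> 2*i \<in> D} {i. i < m \<and> 2*i+1 \<in> D}"
proof (intro set_eqI iffI)
  fix x assume x: "x \<in> D"
  then have xm: "x < 2*m" using assms by auto
  show "x \<in> U {i. i < m \<and> 2*i \<in> D} {i. i < m \<and> 2*i+1 \<in> D}"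
  proof (cases "even x")
    case True
    then have "x = 2*(x div 2)" by simp
    moreover have "x div 2 < m" using xm by simp
    ultimately show ?thesis using x unfolding U_def by (metis (mono_tags, lifting) UnI1 image_eqI mem_Collect_eq)
  next
    case False
    then have "x = 2*(x div 2)+1" by simp
    moreover have "x div 2 < m" using xm by simp
    ultimately show ?thesis using x unfolding U_def by (metis (mono_tags, lifting) UnI2 image_eqI mem_Collect_eq)
  qed
next
  fix x assume "x \<in> U {i. i < m \<and> 2*i \<in> D} {i. i < m \<and> 2*i+1 \<in> D}"
  then show "x \<in> D" unfolding U_def by auto
qed

lemma mod_odd2: "0 < m \<Longrightarrow> (2*a+1) mod (2*m) = 2*(a mod m) + (1::nat)"
  by (simp add: mod_mult2_eq)

lemma R_U:
  assumes m: "0 < m" and A: "A \<subseteq> {..<m}" and B: "B \<subseteq> {..<m}"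
  shows "R (2*m) (U A B) \<longleftrightarrow> cov m A \<and> cov m B"
proof -
  have e0: "(2*i + 2) mod (2*m) = 2*(Suc i mod m)" for i
    using mod_mult_mult1[of 2 "Suc i" m] by simp
  have e1: "\<And>i. (2*i + 1 + 2) mod (2*m) = 2*(Suc i mod m) + 1"
  proof -
    fix i have "2*i+1+2 = 2*(Suc i) + (1::nat)" by simp
    then show "(2*i + 1 + 2) mod (2*m) = 2*(Suc i mod m) + 1" using mod_odd2[OF m, of "Suc i"] by simp
  qed
  have "(\<forall>y<2*m. y \<in> U A B \<or> (y+2) mod (2*m) \<in> U A B) \<longleftrightarrow>
        (\<forall>i<m. i \<in> A \<or> Suc i mod m \<in> A) \<and> (\<forall>i<m. i \<in> B \<or> Suc i mod m \<in> B)"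
  proof
    assume h: "\<forall>y<2*m. y \<in> U A B \<or> (y+2) mod (2*m) \<in> U A B"
    show "(\<forall>i<m. i \<in> A \<or> Suc i mod m \<in> A) \<and> (\<forall>i<m. i \<in> B \<or> Suc i mod m \<in> B)"
    proof (intro conjI allI impI)
      fix i assume i: "i < m"
      then have "2*i < 2*m" by simp
      then show "i \<in> A \<or> Suc i mod m \<in> A" using h e0[of i] U_mem0 by metis
    next
      fix i assume i: "i < m"
      then have "2*i+1 < 2*m" by simp
      then show "i \<in> B \<or> Suc i mod m \<in> B" using h e1[of i] U_mem1 by metis
    qed
  next
    assume h: "(\<forall>i<m. i \<in> A \<or> Suc i mod m \<in> A) \<and> (\<forall>i<m. i \<in> B \<or> Suc i mod m \<in> B)"
    show "\<forall>y<2*m. y \<in> U A B \<or> (y+2) mod (2*m) \<in> U A B"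
    proof (intro allI impI)
      fix y assume y: "y < 2*m"
      show "y \<in> U A B \<or> (y+2) mod (2*m) \<in> U A B"
      proof (cases "even y")
        case True
        then obtain i where i: "y = 2*i" by blast
        then have "i < m" using y by simp
        then show ?thesis using h i e0[of i] U_mem0 by metis
      next
        case False
        then obtain i where i: "y = 2*i+1" using oddE by blast
        then have "i < m" using y by simp
        then show ?thesis using h i e1[of i] U_mem1 by metis
      qed
    qed
  qed
  moreover have "U A B \<subseteq> {..<2*m}" using U_sub[OF A B] .
  ultimately show ?thesis unfolding R_def cov_def using A B by blast
qed

lemma U_inj: "U A B = U A' B' \<Longrightarrow> A = A' \<and> B = B'"
proof -
  assume e: "U A B = U A' B'"
  have "\<And>i. i \<in> A \<longleftrightarrow> i \<in> A'" using U_mem0[of _ A B] U_mem0[of _ A' B'] e by metis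
  moreover have "\<And>i. i \<in> B \<longleftrightarrow> i \<in> B'" using U_mem1[of _ A B] U_mem1[of _ A' B'] e by metis
  ultimately show ?thesis by blast
qed

lemma Mc_sub: "T \<in> Mc m \<Longrightarrow> T \<subseteq> {..<m}" unfolding Mc_def cov_def by auto

lemma even_case:
  assumes n: "n = 2*m" "2 \<le> m" and v: "v < n"
  shows "TDV n v = card {A \<in> Mc m. v div 2 \<in> A} * card (Mc m)"
proof -
  let ?UU = "\<lambda>p. U (fst p) (snd p)"
  have m0: "0 < m" using n by simp
  have n3: "3 \<le> n" using n by simp
  have tds: "\<And>D. is_tds {0..<n} (cycle_adj n) D \<longleftrightarrow> R n D" using tds_iff[OF n3] .
  have repr: "\<And>D. R n D \<Longrightarrow> \<exists>A B. A \<subseteq> {..<m} \<and> B \<subseteq> {..<m} \<and> cov m A \<and> cov m B \<and> D = U A B"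
  proof -
    fix D assume r: "R n D"
    let ?A = "{i. i < m \<and> 2*i \<in> D}" and ?B = "{i. i < m \<and> 2*i+1 \<in> D}"
    have e: "D = U ?A ?B" using U_repr[of D m] r n unfolding R_def by simp
    have r2: "R (2*m) (U ?A ?B)" by (subst e[symmetric]) (use r n in simp)
    have s: "?A \<subseteq> {..<m}" "?B \<subseteq> {..<m}" by auto
    have "cov m ?A \<and> cov m ?B" using R_U[OF m0 s] r2 by simp
    then show "\<exists>A B. A \<subseteq> {..<m} \<and> B \<subseteq> {..<m} \<and> cov m A \<and> cov m B \<and> D = U A B"
      by (intro exI[of _ ?A] exI[of _ ?B] conjI s e) auto
  qed
  have fin: "\<And>A. A \<subseteq> {..<m} \<Longrightarrow> finite A" using finite_subset by blast
  have g: "gamma_t {0..<n} (cycle_adj n) = 2*((m+1) div 2)"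
  proof (rule gamma_eq)
    have S: "S m 0 \<subseteq> {..<m}" "cov m (S m 0)" "card (S m 0) = (m+1) div 2"
      using S_sub[OF m0] cov_S[OF m0 m0] card_S[OF m0] by auto
    have "R n (U (S m 0) (S m 0))" using R_U[OF m0 S(1) S(1)] S(2) n by simp
    then have "is_tds {0..<n} (cycle_adj n) (U (S m 0) (S m 0))" using tds by simp
    moreover have "card (U (S m 0) (S m 0)) = 2*((m+1) div 2)" using U_card fin[OF S(1)] S(3) by simp
    ultimately show "\<exists>D. is_tds {0..<n} (cycle_adj n) D \<and> card D = 2*((m+1) div 2)" by blast
  next
    fix D assume "is_tds {0..<n} (cycle_adj n) D"
    then have "R n D" using tds by simp
    then obtain A B where AB: "A \<subseteq> {..<m}" "B \<subseteq> {..<m}" "cov m A" "cov m B" "D = U A B" using repr by blast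
    then show "2*((m+1) div 2) \<le> card D" using cov_card[OF m0 AB(3)] cov_card[OF m0 AB(4)] U_card fin by simp
  qed
  have gs: "gamma_t_sets {0..<n} (cycle_adj n) = ?UU ` (Mc m \<times> Mc m)"
  proof (intro set_eqI iffI)
    fix D assume "D \<in> gamma_t_sets {0..<n} (cycle_adj n)"
    then have d: "R n D" "card D = 2*((m+1) div 2)" unfolding gamma_t_sets_def g using tds by auto
    then obtain A B where AB: "A \<subseteq> {..<m}" "B \<subseteq> {..<m}" "cov m A" "cov m B" "D = U A B" using repr by blast
    have c: "card A + card B = 2*((m+1) div 2)" using d AB U_card fin by simp
    have "(m+1) div 2 \<le> card A" "(m+1) div 2 \<le> card B" using cov_card[OF m0] AB by auto
    then have "card A = (m+1) div 2" "card B = (m+1) div 2" using c by linarith+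
    then have "(A, B) \<in> Mc m \<times> Mc m" using AB unfolding Mc_def by simp
    then show "D \<in> ?UU ` (Mc m \<times> Mc m)" using AB by force
  next
    fix D assume "D \<in> ?UU ` (Mc m \<times> Mc m)"
    then obtain A B where AB: "A \<in> Mc m" "B \<in> Mc m" "D = U A B" by force
    have s: "A \<subseteq> {..<m}" "B \<subseteq> {..<m}" using AB Mc_sub by auto
    have "cov m A" "cov m B" "card A = (m+1) div 2" "card B = (m+1) div 2" using AB unfolding Mc_def by auto
    then have "R n D" "card D = 2*((m+1) div 2)" using R_U[OF m0 s] AB U_card fin s n by auto
    then show "D \<in> gamma_t_sets {0..<n} (cycle_adj n)" unfolding gamma_t_sets_def g using tds by simp
  qed
  have injUU: "inj_on ?UU X" for X
  proof (rule inj_onI)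
    fix p q assume "?UU p = ?UU q"
    then have "fst p = fst q \<and> snd p = snd q" by (rule U_inj)
    then show "p = q" by (simp add: prod_eq_iff)
  qed
  define j where "j = v div 2"
  have j: "j < m" using v n unfolding j_def by simp
  have "TDV n v = card {D \<in> ?UU ` (Mc m \<times> Mc m). v \<in> D}" unfolding TDV_def gs by simp
  also have "\<dots> = card {A \<in> Mc m. j \<in> A} * card (Mc m)"
  proof (cases "even v")
    case True
    then have vj: "v = 2*j" unfolding j_def by simp
    have "{D \<in> ?UU ` (Mc m \<times> Mc m). v \<in> D} = ?UU ` ({A \<in> Mc m. j \<in> A} \<times> Mc m)"
    proof (intro set_eqI iffI)
      fix D assume "D \<in> {D \<in> ?UU ` (Mc m \<times> Mc m). v \<in> D}"
      then obtain p where p: "p \<in> Mc m \<times> Mc m" "D = ?UU p" "v \<in> D" by blast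
      then have "j \<in> fst p" using U_mem0[of j "fst p" "snd p"] vj by simp
      then have "p \<in> {A \<in> Mc m. j \<in> A} \<times> Mc m" using p(1) by (cases p) auto
      then show "D \<in> ?UU ` ({A \<in> Mc m. j \<in> A} \<times> Mc m)" using p(2) by blast
    next
      fix D assume "D \<in> ?UU ` ({A \<in> Mc m. j \<in> A} \<times> Mc m)"
      then obtain p where p: "p \<in> {A \<in> Mc m. j \<in> A} \<times> Mc m" "D = ?UU p" by blast
      then have "v \<in> D" using U_mem0[of j "fst p" "snd p"] vj by (cases p) auto
      moreover have "p \<in> Mc m \<times> Mc m" using p(1) by (cases p) auto
      ultimately show "D \<in> {D \<in> ?UU ` (Mc m \<times> Mc m). v \<in> D}" using p(2) by blast
    qed
    then show ?thesis using injUU by (simp add: card_image card_cartesian_product)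
  next
    case False
    then have vj: "v = 2*j+1" unfolding j_def by simp
    have "{D \<in> ?UU ` (Mc m \<times> Mc m). v \<in> D} = ?UU ` (Mc m \<times> {A \<in> Mc m. j \<in> A})"
    proof (intro set_eqI iffI)
      fix D assume "D \<in> {D \<in> ?UU ` (Mc m \<times> Mc m). v \<in> D}"
      then obtain p where p: "p \<in> Mc m \<times> Mc m" "D = ?UU p" "v \<in> D" by blast
      then have "j \<in> snd p" using U_mem1[of j "fst p" "snd p"] vj by simp
      then have "p \<in> Mc m \<times> {A \<in> Mc m. j \<in> A}" using p(1) by (cases p) auto
      then show "D \<in> ?UU ` (Mc m \<times> {A \<in> Mc m. j \<in> A})" using p(2) by blast
    next
      fix D assume "D \<in> ?UU ` (Mc m \<times> {A \<in> Mc m. j \<in> A})"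
      then obtain p where p: "p \<in> Mc m \<times> {A \<in> Mc m. j \<in> A}" "D = ?UU p" by blast
      then have "v \<in> D" using U_mem1[of j "fst p" "snd p"] vj by (cases p) auto
      moreover have "p \<in> Mc m \<times> Mc m" using p(1) by (cases p) auto
      ultimately show "D \<in> {D \<in> ?UU ` (Mc m \<times> Mc m). v \<in> D}" using p(2) by blast
    qed
    then show ?thesis using injUU by (simp add: card_image card_cartesian_product)
  qed
  finally show ?thesis unfolding j_def .
qed

theorem corollary4p2:
  fixes n v :: nat
  assumes "n \<ge> 3" and "v < n"
  shows "TDV n v = (if n mod 4 = 0 then 2
                    else if n mod 4 = 1 \<or> n mod 4 = 3 then n div 2 + 1
                    else (n div 2) * ((n + 2) div 4))"
proof (cases "even n")
  case False
  have "TDV n v = (n+1) div 2" using odd_case[OF assms(1) False assms(2)] .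
  moreover have "n mod 4 = 1 \<or> n mod 4 = 3" "n mod 4 \<noteq> 0" "(n+1) div 2 = n div 2 + 1"
    using False by presburger+
  ultimately show ?thesis by simp
next
  case True
  define m where "m = n div 2"
  have nm: "n = 2*m" "2 \<le> m" using True assms(1) unfolding m_def by auto
  have t: "TDV n v = card {A \<in> Mc m. v div 2 \<in> A} * card (Mc m)" using even_case[OF nm assms(2)] .
  have j: "v div 2 < m" using assms(2) nm by simp
  show ?thesis
  proof (cases "even m")
    case True
    then have "TDV n v = 2" using t card_Mc_even_j[OF True nm(2) j] card_Mc_even[OF True nm(2)] by simp
    moreover have "n mod 4 = 0" using True nm by presburger
    ultimately show ?thesis by simp
  next
    case False
    then have "TDV n v = ((m+1) div 2) * m" using t card_Mc_odd_j[OF False j] card_Mc_odd[OF False] by simp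
    moreover have "n mod 4 = 2" "(n+2) div 4 = (m+1) div 2" "n div 2 = m" using False nm by presburger+
    ultimately show ?thesis by simp
  qed
qed

end
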